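(* Let $G$ be a finite, simple, connected graph of order $n\ge 2$. Then $\dim_{wt}(G)=n$ if and only if every vertex of $G$ is a twin.
   Context: $d(x,y)$ is the shortest-path distance and $N(x)$ the set of neighbors of $x$. A set $W\subseteq V(G)$ is a resolving set if for every two distinct vertices $y,z$ there is $x\in W$ with $d(y,x)\ne d(z,x)$. A set $W$ is a weak total resolving set (WTR-set) if $W$ is resolving and, for every $w\in W$ and every $x\in V(G)\setminus W$, there is $w'\in W\setminus\{w\}$ with $d(x,w')\ne d(w,w')$. $\dim_{wt}(G)$ is the minimum cardinality of a WTR-set. Two distinct vertices $u,v$ are twins if $N(u)\setminus\{v\}=N(v)\setminus\{u\}$; a vertex $u$ is a twin if there exists $v\ne u$ such that $u,v$ are twins. *)

theory Defs
  imports Main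
begin

definition simple_graph :: "'a set \<Rightarrow> ('a \<Rightarrow> 'a \<Rightarrow> bool) \<Rightarrow> bool" where
  "simple_graph V E \<longleftrightarrow> finite V \<and> (\<forall>x y. E x y \<longrightarrow> x \<in> V \<and> y \<in> V)
     \<and> (\<forall>x y. E x y \<longrightarrow> E y x) \<and> (\<forall>x. \<not> E x x)"

definition walk :: "('a \<Rightarrow> 'a \<Rightarrow> bool) \<Rightarrow> 'a list \<Rightarrow> 'a \<Rightarrow> 'a \<Rightarrow> bool" where
  "walk E xs x y \<longleftrightarrow> xs \<noteq> [] \<and> hd xs = x \<and> last xs = y
     \<and> (\<forall>i. Suc i < length xs \<longrightarrow> E (xs ! i) (xs ! Suc i))"

definition connected_graph :: "'a set \<Rightarrow> ('a \<Rightarrow> 'a \<Rightarrow> bool) \<Rightarrow> bool" where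
  "connected_graph V E \<longleftrightarrow> (\<forall>x\<in>V. \<forall>y\<in>V. \<exists>xs. walk E xs x y)"

definition dist :: "('a \<Rightarrow> 'a \<Rightarrow> bool) \<Rightarrow> 'a \<Rightarrow> 'a \<Rightarrow> nat" where
  "dist E x y = (LEAST k. \<exists>xs. walk E xs x y \<and> length xs = Suc k)"

definition nbhd :: "('a \<Rightarrow> 'a \<Rightarrow> bool) \<Rightarrow> 'a \<Rightarrow> 'a set" where
  "nbhd E x = {y. E x y}"

definition resolving :: "'a set \<Rightarrow> ('a \<Rightarrow> 'a \<Rightarrow> bool) \<Rightarrow> 'a set \<Rightarrow> bool" where
  "resolving V E W \<longleftrightarrow> W \<subseteq> V \<and>
     (\<forall>y\<in>V. \<forall>z\<in>V. y \<noteq> z \<longrightarrow> (\<exists>x\<in>W. dist E y x \<noteq> dist E z x))"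

definition wtr_set :: "'a set \<Rightarrow> ('a \<Rightarrow> 'a \<Rightarrow> bool) \<Rightarrow> 'a set \<Rightarrow> bool" where
  "wtr_set V E W \<longleftrightarrow> resolving V E W \<and>
     (\<forall>w\<in>W. \<forall>x\<in>V - W. \<exists>w'\<in>W - {w}. dist E x w' \<noteq> dist E w w')"

definition wt_dim :: "'a set \<Rightarrow> ('a \<Rightarrow> 'a \<Rightarrow> bool) \<Rightarrow> nat" where
  "wt_dim V E = (LEAST k. \<exists>W. wtr_set V E W \<and> card W = k)"

definition twins :: "('a \<Rightarrow> 'a \<Rightarrow> bool) \<Rightarrow> 'a \<Rightarrow> 'a \<Rightarrow> bool" where
  "twins E u v \<longleftrightarrow> u \<noteq> v \<and> nbhd E u - {v} = nbhd E v - {u}"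

definition is_twin :: "'a set \<Rightarrow> ('a \<Rightarrow> 'a \<Rightarrow> bool) \<Rightarrow> 'a \<Rightarrow> bool" where
  "is_twin V E u \<longleftrightarrow> (\<exists>v\<in>V. twins E u v)"

end

theory Submission
  imports Defs
begin

lemma walk_twin:
  assumes sg: "simple_graph V E" and tw: "twins E x v" and wk: "walk E xs x w"
    and "w \<noteq> x" "w \<noteq> v"
  shows "\<exists>ys. walk E ys v w \<and> length ys \<le> length xs"
proof -
  have ne: "xs \<noteq> []" and h: "hd xs = x" and l: "last xs = w"
    and adj: "\<forall>i. Suc i < length xs \<longrightarrow> E (xs ! i) (xs ! Suc i)"
    using wk unfolding walk_def by auto
  obtain a rest where xs: "xs = x # a # rest"
  proof (cases xs)
    case Nil then show ?thesis using ne by simp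
  next
    case (Cons b t)
    then have b: "b = x" using h by simp
    show ?thesis
    proof (cases t)
      case Nil then show ?thesis using Cons b l \<open>w \<noteq> x\<close> by simp
    next
      case (Cons c r) then show ?thesis using \<open>xs = b # t\<close> b that by simp
    qed
  qed
  have Exa: "E x a" using adj xs by (metis length_Cons nth_Cons_0 nth_Cons_Suc zero_less_Suc Suc_less_eq)
  have adj2: "\<And>i. Suc i < length (a # rest) \<Longrightarrow> E ((a#rest) ! i) ((a#rest) ! Suc i)"
  proof -
    fix i assume "Suc i < length (a # rest)"
    then have "Suc (Suc i) < length xs" using xs by simp
    then have "E (xs ! Suc i) (xs ! Suc (Suc i))" using adj by blast
    then show "E ((a#rest) ! i) ((a#rest) ! Suc i)" using xs by simp
  qed
  have lw: "last (a # rest) = w" using l xs by simp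
  show ?thesis
  proof (cases "a = v")
    case True
    have "walk E (a # rest) v w" unfolding walk_def using True lw adj2 by auto
    then show ?thesis using xs by (intro exI[of _ "a # rest"]) simp
  next
    case False
    have "a \<noteq> x" using Exa sg unfolding simple_graph_def by auto
    have "a \<in> nbhd E x - {v}" using Exa False unfolding nbhd_def by simp
    then have "a \<in> nbhd E v - {x}" using tw unfolding twins_def by simp
    then have Eva: "E v a" unfolding nbhd_def by simp
    have "walk E (v # a # rest) v w" unfolding walk_def
    proof (intro conjI allI impI)
      fix i assume "Suc i < length (v # a # rest)"
      then show "E ((v # a # rest) ! i) ((v # a # rest) ! Suc i)"
        using Eva adj2 by (cases i) auto
    qed (use lw in auto)
    then show ?thesis using xs by (intro exI[of _ "v # a # rest"]) simp
  qed
qed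

lemma dist_le: "walk E xs x y \<Longrightarrow> dist E x y \<le> length xs - 1"
  unfolding dist_def
  by (rule Least_le) (rule exI[of _ xs], auto simp: walk_def)

lemma dist_ex:
  assumes "connected_graph V E" "x \<in> V" "y \<in> V"
  shows "\<exists>xs. walk E xs x y \<and> length xs = Suc (dist E x y)"
proof -
  obtain xs where w: "walk E xs x y" using assms unfolding connected_graph_def by blast
  then have "\<exists>k xs. walk E xs x y \<and> length xs = Suc k"
    by (intro exI[of _ "length xs - 1"] exI[of _ xs]) (auto simp: walk_def)
  then show ?thesis unfolding dist_def by (rule LeastI_ex)
qed

lemma dist0:
  assumes "connected_graph V E" "x \<in> V" "y \<in> V"
  shows "dist E x y = 0 \<longleftrightarrow> x = y"
proof
  assume "dist E x y = 0"
  then obtain xs where "walk E xs x y" "length xs = 1" using dist_ex[OF assms] by auto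
  then show "x = y" unfolding walk_def by (cases xs) auto
next
  assume "x = y"
  have "walk E [x] x x" unfolding walk_def by simp
  then show "dist E x y = 0" using dist_le[of E "[x]" x x] \<open>x = y\<close> by simp
qed

lemma dist1:
  assumes "simple_graph V E" "connected_graph V E" "x \<in> V" "y \<in> V"
  shows "dist E x y = 1 \<longleftrightarrow> E x y"
proof
  assume "dist E x y = 1"
  then obtain xs where w: "walk E xs x y" "length xs = 2" using dist_ex[OF assms(2-4)] by auto
  then obtain a b where "xs = [a, b]"
    by (metis One_nat_def Suc_1 length_0_conv length_Suc_conv)
  then show "E x y" using w unfolding walk_def by auto
next
  assume e: "E x y"
  have "walk E [x, y] x y" unfolding walk_def using e by (auto simp: nth_Cons split: nat.splits)
  then have "dist E x y \<le> 1" using dist_le[of E "[x,y]" x y] by simp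
  moreover have "x \<noteq> y" using e assms(1) unfolding simple_graph_def by auto
  ultimately show "dist E x y = 1" using dist0[OF assms(2-4)] by linarith
qed

lemma twin_dist_le:
  assumes "simple_graph V E" "connected_graph V E" "x \<in> V" "w \<in> V"
    "twins E x v" "w \<noteq> x" "w \<noteq> v"
  shows "dist E v w \<le> dist E x w"
proof -
  obtain xs where "walk E xs x w" "length xs = Suc (dist E x w)" using dist_ex[OF assms(2-4)] by auto
  then obtain ys where "walk E ys v w" "length ys \<le> length xs"
    using walk_twin[OF assms(1,5)] assms(6,7) by blast
  then show ?thesis using dist_le[of E ys v w] \<open>length xs = _\<close> by simp
qed

lemma twin_dist:
  assumes "simple_graph V E" "connected_graph V E" "x \<in> V" "v \<in> V" "w \<in> V"
    "twins E x v" "w \<noteq> x" "w \<noteq> v"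
  shows "dist E x w = dist E v w"
proof -
  have "twins E v x" using assms(6) unfolding twins_def by auto
  then show ?thesis using twin_dist_le[OF assms(1,2,3,5,6,7,8)]
      twin_dist_le[OF assms(1,2,4,5) \<open>twins E v x\<close> assms(8,7)] by simp
qed

theorem theorem4:
  fixes V :: "'a set" and E :: "'a \<Rightarrow> 'a \<Rightarrow> bool"
  assumes "simple_graph V E" and "connected_graph V E" and "card V \<ge> 2"
  shows "wt_dim V E = card V \<longleftrightarrow> (\<forall>u\<in>V. is_twin V E u)"
proof -
  have fin: "finite V" using assms(1) unfolding simple_graph_def by simp
  have res: "\<And>W. W \<subseteq> V \<Longrightarrow> (\<forall>y\<in>V. \<forall>z\<in>V. y \<noteq> z \<longrightarrow> y \<in> W \<or> z \<in> W) \<Longrightarrow> resolving V E W"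
  proof -
    fix W assume W: "W \<subseteq> V" "\<forall>y\<in>V. \<forall>z\<in>V. y \<noteq> z \<longrightarrow> y \<in> W \<or> z \<in> W"
    show "resolving V E W" unfolding resolving_def
    proof (intro conjI W(1) ballI impI)
      fix y z assume yz: "y \<in> V" "z \<in> V" "y \<noteq> z"
      show "\<exists>x\<in>W. dist E y x \<noteq> dist E z x"
      proof (cases "y \<in> W")
        case True
        have "dist E y y = 0" "dist E z y \<noteq> 0" using dist0[OF assms(2)] yz by auto
        then show ?thesis using True by (intro bexI[of _ y]) auto
      next
        case False
        then have "z \<in> W" using W yz by blast
        moreover have "dist E z z = 0" "dist E y z \<noteq> 0" using dist0[OF assms(2)] yz by auto
        ultimately show ?thesis by (intro bexI[of _ z]) auto
      qed
    qed
  qed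
  have Vw: "wtr_set V E V" unfolding wtr_set_def using res by auto
  show ?thesis
  proof
    assume d: "wt_dim V E = card V"
    show "\<forall>u\<in>V. is_twin V E u"
    proof (rule ccontr)
      assume "\<not> (\<forall>u\<in>V. is_twin V E u)"
      then obtain u where u: "u \<in> V" "\<not> is_twin V E u" by blast
      define W where "W = V - {u}"
      have "wtr_set V E W" unfolding wtr_set_def
      proof (intro conjI ballI)
        show "resolving V E W" using res[of W] unfolding W_def by auto
      next
        fix w x assume w: "w \<in> W" and x: "x \<in> V - W"
        then have xu: "x = u" and wV: "w \<in> V" and wu: "w \<noteq> u" unfolding W_def by auto
        show "\<exists>w'\<in>W - {w}. dist E x w' \<noteq> dist E w w'"
        proof (rule ccontr)
          assume "\<not> ?thesis"
          then have eq: "\<And>w'. w' \<in> V \<Longrightarrow> w' \<noteq> u \<Longrightarrow> w' \<noteq> w \<Longrightarrow> dist E u w' = dist E w w'"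
            using xu unfolding W_def by auto
          have "nbhd E u - {w} = nbhd E w - {u}"
          proof (intro set_eqI iffI)
            fix y assume y: "y \<in> nbhd E u - {w}"
            then have "E u y" "y \<noteq> w" unfolding nbhd_def by auto
            then have yV: "y \<in> V" and yu: "y \<noteq> u" using assms(1) unfolding simple_graph_def by auto
            have "dist E u y = 1" using dist1[OF assms(1,2) u(1) yV] \<open>E u y\<close> by simp
            then have "dist E w y = 1" using eq[OF yV yu \<open>y \<noteq> w\<close>] by simp
            then have "E w y" using dist1[OF assms(1,2) wV yV] by simp
            then show "y \<in> nbhd E w - {u}" using yu unfolding nbhd_def by simp
          next
            fix y assume y: "y \<in> nbhd E w - {u}"
            then have "E w y" "y \<noteq> u" unfolding nbhd_def by auto
            then have yV: "y \<in> V" and yw: "y \<noteq> w" using assms(1) unfolding simple_graph_def by auto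
            have "dist E w y = 1" using dist1[OF assms(1,2) wV yV] \<open>E w y\<close> by simp
            then have "dist E u y = 1" using eq[OF yV \<open>y \<noteq> u\<close> yw] by simp
            then have "E u y" using dist1[OF assms(1,2) u(1) yV] by simp
            then show "y \<in> nbhd E u - {w}" using yw unfolding nbhd_def by simp
          qed
          then have "twins E u w" unfolding twins_def using wu by auto
          then show False using u wV unfolding is_twin_def by blast
        qed
      qed
      then have "wt_dim V E \<le> card W" unfolding wt_dim_def by (intro Least_le) blast
      moreover have "card W < card V" unfolding W_def using fin u(1) assms(3)
        by (simp add: card_Diff_singleton)
      ultimately show False using d by simp
    qed
  next
    assume all: "\<forall>u\<in>V. is_twin V E u"
    have onlyV: "W = V" if W: "wtr_set V E W" for W
    proof (rule ccontr)
      assume "W \<noteq> V"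
      moreover have WV: "W \<subseteq> V" using W unfolding wtr_set_def resolving_def by simp
      ultimately obtain x where x: "x \<in> V" "x \<notin> W" by blast
      then obtain v where v: "v \<in> V" "twins E x v" using all unfolding is_twin_def by blast
      have xv: "x \<noteq> v" using v unfolding twins_def by simp
      show False
      proof (cases "v \<in> W")
        case True
        then obtain w' where w': "w' \<in> W - {v}" "dist E x w' \<noteq> dist E v w'"
          using W x unfolding wtr_set_def by blast
        have "w' \<noteq> x" using w' x by auto
        then show False using twin_dist[OF assms(1,2) x(1) v(1) _ v(2)] w' WV by blast
      next
        case False
        then obtain w where w: "w \<in> W" "dist E x w \<noteq> dist E v w"
          using W x v xv unfolding wtr_set_def resolving_def by blast
        have "w \<noteq> x" "w \<noteq> v" using w x False by auto
        then show False using twin_dist[OF assms(1,2) x(1) v(1) _ v(2)] w WV by blast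
      qed
    qed
    have "wt_dim V E = (LEAST k. k = card V)" unfolding wt_dim_def
      using onlyV Vw by metis
    then show "wt_dim V E = card V" by (simp add: Least_equality)
  qed
qed

end
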